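(* Let $(\Omega,\mathcal F,\mathbb P)$ be a probability space carrying a group of measurable bijections $\{\theta_n\}_{n\in\mathbb Z}$ each preserving $\mathbb P$, and let $\{a_n\}_{n\in\mathbb Z}$ be i.i.d. flow-compatible random variables with values in $\{1,2,\dots\}$, with $\mathbb E[a_0]<\infty$ and $\mathbb P[a_0=1]\in(0,1)$. Let $f(n)=n+a_n$, and let $\Phi^s,\Phi^e,\lambda^s,\lambda^e,\tilde D^e(\cdot),L(\cdot),n^{(d)},n^{(l)}$ be as in the context. Then for every measurable diagonally invariant function $g:\Omega\times\mathbb Z\times\mathbb Z\to[0,\infty)$, $$\lambda^s\,\mathbb E^s\Big[\sum_{n\in\tilde D^e(0)}g(0,n)\Big]=\lambda^s\,\mathbb E^s[g(0,0)]+\lambda^e\,\mathbb E^e[g(n^{(d)},0)]$$ and $$\lambda^s\,\mathbb E^s\Big[\sum_{n\in L(0)}g(0,n)\Big]=\lambda^s\,\mathbb E^s[g(0,0)]+\lambda^e\,\mathbb E^e[g(n^{(l)},0)],$$ where $g(m,n)$ stands for $g(\omega,m,n)$.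
   Context: $f^j$ is the $j$-th iterate of $f$ ($f^0$ the identity). Descendants: $D(n)=\{m:\exists\,j\ge0,\ f^j(m)=n\}$; $n$ is successful if $D(n)$ is infinite, ephemeral otherwise; $\Phi^s,\Phi^e$ are the sets of successful and ephemeral integers, with intensities $\lambda^s=\mathbb P[0\in\Phi^s]$, $\lambda^e=\mathbb P[0\in\Phi^e]$; $\mathbb E^s,\mathbb E^e$ are expectations under $\mathbb P[\cdot\mid0\in\Phi^s]$, $\mathbb P[\cdot\mid 0\in\Phi^e]$. For $n\in\Phi^s$, the direct ephemeral descendants of $n$ are $D^e(n)=\{m\in D(n)\cap\Phi^e:\ f^k(m)=n \text{ for the smallest } k>0 \text{ with } f^k(m)\in\Phi^s\}$, and $\tilde D^e(n)=D^e(n)\cup\{n\}$. The cousins (of all degrees) of $n$ are $L(n)=\{m\in\mathbb Z:\exists\,j\ge0,\ f^j(m)=f^j(n)\}$. On $\{0\in\Phi^e\}$, $n^{(d)}$ denotes the (a.s. unique) successful integer with $0\in\tilde D^e(n^{(d)})$ and $n^{(l)}$ the (a.s. unique) successful integer with $0\in L(n^{(l)})$. A function $g$ is diagonally invariant if $g(\theta_k\omega,m,n)=g(\omega,m+k,n+k)$ for all $k,m,n\in\mathbb Z$. *)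

theory Defs
  imports "HOL-Probability.Probability"
begin

definition jump_map :: "(int \<Rightarrow> 'w \<Rightarrow> nat) \<Rightarrow> 'w \<Rightarrow> int \<Rightarrow> int" where
  "jump_map a w = (\<lambda>n. n + int (a n w))"

definition desc :: "(int \<Rightarrow> int) \<Rightarrow> int \<Rightarrow> int set" where
  "desc f n = {m. \<exists>j. (f ^^ j) m = n}"

definition successful :: "(int \<Rightarrow> int) \<Rightarrow> int set" where
  "successful f = {n. infinite (desc f n)}"

definition ephemeral :: "(int \<Rightarrow> int) \<Rightarrow> int set" where
  "ephemeral f = {n. finite (desc f n)}"

definition dir_eph :: "(int \<Rightarrow> int) \<Rightarrow> int \<Rightarrow> int set" where
  "dir_eph f n = {m \<in> desc f n \<inter> ephemeral f.
      (f ^^ (LEAST k. 0 < k \<and> (f ^^ k) m \<in> successful f)) m = n}"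

definition dir_eph_tilde :: "(int \<Rightarrow> int) \<Rightarrow> int \<Rightarrow> int set" where
  "dir_eph_tilde f n = insert n (dir_eph f n)"

definition cousins :: "(int \<Rightarrow> int) \<Rightarrow> int \<Rightarrow> int set" where
  "cousins f n = {m. \<exists>j. (f ^^ j) m = (f ^^ j) n}"

text \<open>n^(d) and n^(l) (a.s. unique, hence defined via THE).\<close>
definition n_d :: "(int \<Rightarrow> int) \<Rightarrow> int" where
  "n_d f = (THE n. n \<in> successful f \<and> 0 \<in> dir_eph_tilde f n)"

definition n_l :: "(int \<Rightarrow> int) \<Rightarrow> int" where
  "n_l f = (THE n. n \<in> successful f \<and> 0 \<in> cousins f n)"

definition cond_nn_exp :: "'w measure \<Rightarrow> 'w set \<Rightarrow> ('w \<Rightarrow> ennreal) \<Rightarrow> ennreal" where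
  "cond_nn_exp M A X = (\<integral>\<^sup>+ w. X w * indicator A w \<partial>M) / emeasure M A"

end

theory Submission
  imports Defs
begin

definition cutp :: "(int \<Rightarrow> int) \<Rightarrow> int \<Rightarrow> bool" where
  "cutp f x \<longleftrightarrow> (\<forall>y<x. f y \<le> x)"

locale incf = fixes f :: "int \<Rightarrow> int" assumes inc: "\<And>n. n < f n"
begin

lemma iter_ge: "m + int j \<le> (f ^^ j) m"
proof (induction j)
  case 0 then show ?case by simp
next
  case (Suc j) then show ?case using inc[of "(f^^j) m"] by simp
qed

lemma iter_add: "(f ^^ (i + j)) m = (f ^^ i) ((f ^^ j) m)"
  by (simp add: funpow_add)

lemma iter_strict: assumes "i < j" shows "(f ^^ i) m < (f ^^ j) m"
proof -
  have "(f ^^ j) m = (f ^^ (j - i)) ((f ^^ i) m)" using assms iter_add[of "j-i" i m] by simp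
  also have "\<dots> \<ge> (f ^^ i) m + int (j - i)" by (rule iter_ge)
  finally show ?thesis using assms by simp
qed

lemma iter_inj: assumes "(f ^^ i) m = (f ^^ j) m" shows "i = j"
  using iter_strict[where i=i and j=j and m=m] iter_strict[where i=j and j=i and m=m] assms by (cases "i < j"; cases "j < i") auto

lemma iter_le_iff: "(f ^^ i) m \<le> (f ^^ j) m \<longleftrightarrow> i \<le> j"
  using iter_strict[where i=i and j=j and m=m] iter_strict[where i=j and j=i and m=m] by (cases "i < j"; cases "j < i") auto

lemma desc_le: "m \<in> desc f n \<Longrightarrow> m \<le> n"
  by (auto simp: desc_def) (smt (verit) iter_ge of_nat_0_le_iff)

lemma desc_trans: "y \<in> desc f x \<Longrightarrow> x \<in> desc f z \<Longrightarrow> y \<in> desc f z"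
  unfolding desc_def by (auto simp: iter_add[symmetric])

lemma desc_self: "n \<in> desc f n"
  unfolding desc_def by (auto intro: exI[of _ 0])

lemma desc_iter: "m \<in> desc f ((f ^^ j) m)"
  unfolding desc_def by auto

lemma ephemeral_iff: "n \<in> ephemeral f \<longleftrightarrow> n \<notin> successful f"
  unfolding ephemeral_def successful_def by auto

lemma succ_iff: "n \<in> successful f \<longleftrightarrow> (\<forall>N::int. \<exists>m\<in>desc f n. m < N)"
proof
  assume "n \<in> successful f"
  then have inf: "infinite (desc f n)" by (simp add: successful_def)
  show "\<forall>N::int. \<exists>m\<in>desc f n. m < N"
  proof (rule ccontr)
    assume "\<not> ?thesis"
    then obtain N where "\<forall>m\<in>desc f n. N \<le> m" by (auto simp: not_less)
    then have "desc f n \<subseteq> {N..n}" using desc_le by auto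
    then show False using inf finite_subset by (metis finite_atLeastAtMost_int)
  qed
next
  assume H: "\<forall>N::int. \<exists>m\<in>desc f n. m < N"
  show "n \<in> successful f"
  proof (unfold successful_def, rule, rule)
    assume "finite (desc f n)"
    moreover have "desc f n \<noteq> {}" using desc_self by auto
    ultimately have "\<forall>m\<in>desc f n. Min (desc f n) \<le> m" by auto
    then show False using H by (meson not_less)
  qed
qed

lemma succ_f: "n \<in> successful f \<Longrightarrow> f n \<in> successful f"
proof -
  have "n \<in> desc f (f n)" using desc_iter[of n 1] by simp
  then show "n \<in> successful f \<Longrightarrow> f n \<in> successful f" unfolding succ_iff by (meson desc_trans)
qed

lemma succ_iter: "n \<in> successful f \<Longrightarrow> (f ^^ j) n \<in> successful f"
  by (induction j) (auto intro: succ_f)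

lemma cut_desc: assumes "cutp f x" "y \<le> x" shows "y \<in> desc f x"
  using assms(2)
proof (induction "nat (x - y)" arbitrary: y rule: less_induct)
  case less
  show ?case
  proof (cases "y = x")
    case True then show ?thesis using desc_self by simp
  next
    case False
    then have "f y \<le> x" using assms(1) less.prems by (auto simp: cutp_def)
    moreover have "y < f y" by (rule inc)
    ultimately have "f y \<in> desc f x" using less by auto
    then show ?thesis using desc_trans[OF desc_iter[of y 1]] by simp
  qed
qed

lemma cut_succ: assumes "cutp f x" shows "x \<in> successful f"
  unfolding succ_iff
proof
  fix N :: int
  show "\<exists>m\<in>desc f x. m < N" using cut_desc[OF assms, of "min (N-1) x"]
    by (intro bexI[of _ "min (N-1) x"]) auto
qed

lemma K1: assumes "cutp f c" "m \<in> successful f" "c < m" shows "\<exists>i. (f ^^ i) c = m"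
proof -
  obtain y where y: "y \<in> desc f m" "y < c" using assms(2) unfolding succ_iff by blast
  obtain j where j: "(f ^^ j) y = m" using y unfolding desc_def by auto
  obtain j' where j': "(f ^^ j') y = c" using cut_desc[OF assms(1), of y] y unfolding desc_def by auto
  have "j' < j" using iter_le_iff[where i=j and j=j' and m=y] j j' assms(3) by auto
  then have "(f ^^ (j - j')) c = m" using iter_add[where i="j - j'" and j=j' and m=y] j j' by simp
  then show ?thesis by blast
qed

lemma K2: assumes "cutp f c" "m \<in> successful f" "m' \<in> successful f" "c < m" "c < m'"
  "(f ^^ J) m = (f ^^ J) m'" shows "m = m'"
proof -
  obtain i where i: "(f ^^ i) c = m" using K1 assms by blast
  obtain i' where i': "(f ^^ i') c = m'" using K1 assms by blast
  have "(f ^^ (J + i)) c = (f ^^ (J + i')) c" using assms(6) i i' by (simp add: iter_add)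
  then have "i = i'" using iter_inj by force
  then show ?thesis using i i' by simp
qed


lemma nd_unique: assumes "0 \<in> ephemeral f" "cutp f x" "0 < x"
  shows "\<exists>m0. \<forall>m. (m \<in> successful f \<and> 0 \<in> dir_eph_tilde f m) \<longleftrightarrow> m = m0"
proof -
  define K where "K = (LEAST k. 0 < k \<and> (f ^^ k) 0 \<in> successful f)"
  obtain k where k: "(f ^^ k) 0 = x" using cut_desc[OF assms(2), of 0] assms(3) unfolding desc_def by auto
  have "k \<noteq> 0" using k assms(3) by (cases k) auto
  then have ex: "0 < k \<and> (f ^^ k) 0 \<in> successful f" using k cut_succ[OF assms(2)] by auto
  have KP: "0 < K \<and> (f ^^ K) 0 \<in> successful f" unfolding K_def by (rule LeastI, rule ex)
  have e: "0 \<notin> successful f" using assms(1) ephemeral_iff by auto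
  show ?thesis
  proof (intro exI allI iffI)
    fix m assume m: "m \<in> successful f \<and> 0 \<in> dir_eph_tilde f m"
    then have "0 \<noteq> m" using e by auto
    then have "0 \<in> dir_eph f m" using m by (auto simp: dir_eph_tilde_def)
    then show "m = (f ^^ K) 0" by (simp add: dir_eph_def K_def)
  next
    fix m assume "m = (f ^^ K) 0"
    then show "m \<in> successful f \<and> 0 \<in> dir_eph_tilde f m"
      using KP desc_iter[of 0 K] assms(1) by (auto simp: dir_eph_tilde_def dir_eph_def K_def)
  qed
qed

lemma nd_succ: assumes "0 \<in> successful f"
  shows "(m \<in> successful f \<and> 0 \<in> dir_eph_tilde f m) \<longleftrightarrow> m = 0"
  using assms by (auto simp: dir_eph_tilde_def dir_eph_def ephemeral_iff)

lemma cuts_below: assumes "\<forall>N. \<exists>c<N. cutp f c"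
  shows "\<exists>S. finite S \<and> card S = k \<and> (\<forall>v\<in>S. cutp f v \<and> v < 0)"
proof (induction k)
  case 0 then show ?case by (intro exI[of _ "{}"]) auto
next
  case (Suc k)
  then obtain S where S: "finite S" "card S = k" "\<forall>v\<in>S. cutp f v \<and> v < 0" by blast
  obtain B where B: "\<forall>v\<in>S. B \<le> v"
  proof (cases "S = {}")
    case True then show ?thesis by (intro that[of 0]) auto
  next
    case False then show ?thesis using S(1) by (intro that[of "Min S"]) auto
  qed
  obtain c where c: "c < min B 0" "cutp f c" using assms by blast
  have "c \<notin> S" using B c by force
  then show ?case using S c by (intro exI[of _ "insert c S"]) auto
qed

lemma cous_uniq: assumes "\<forall>N. \<exists>c<N. cutp f c" "m \<in> successful f" "m' \<in> successful f"
  "0 \<in> cousins f m" "0 \<in> cousins f m'" shows "m = m'"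
proof -
  obtain j where j: "(f ^^ j) 0 = (f ^^ j) m" using assms(4) by (auto simp: cousins_def)
  obtain j' where j': "(f ^^ j') 0 = (f ^^ j') m'" using assms(5) by (auto simp: cousins_def)
  have "(f ^^ (j' + j)) m = (f ^^ (j + j')) m'"
    using j j' by (metis iter_add add.commute)
  then have eq: "(f ^^ (j' + j)) m = (f ^^ (j' + j)) m'" by (simp add: add.commute)
  obtain c where c: "c < min m m'" "cutp f c" using assms(1) by blast
  show ?thesis using K2[OF c(2) assms(2,3) _ _ eq] c by simp
qed

lemma cous_exists: assumes "\<forall>N. \<exists>c<N. cutp f c" "cutp f x" "0 < x"
  shows "\<exists>m. m \<in> successful f \<and> 0 \<in> cousins f m"
proof -
  obtain k where k: "(f ^^ k) 0 = x" using cut_desc[OF assms(2), of 0] assms(3) unfolding desc_def by auto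
  obtain S where S: "finite S" "card S = Suc k" "\<forall>v\<in>S. cutp f v \<and> v < 0"
    using cuts_below[OF assms(1)] by blast
  have "S \<noteq> {}" using S(2) by auto
  define c where "c = Min S"
  have cS: "c \<in> S" using S(1) \<open>S \<noteq> {}\<close> c_def by simp
  have cmin: "\<forall>v\<in>S. c \<le> v" using S(1) c_def by simp
  obtain j where j: "(f ^^ j) c = x" using cut_desc[OF assms(2), of c] S(3) cS assms(3) unfolding desc_def by force
  have sub: "S \<subseteq> (\<lambda>i. (f ^^ i) c) ` {..<j}"
  proof
    fix v assume v: "v \<in> S"
    obtain i where i: "(f ^^ i) c = v" using cut_desc[of v c] S(3) v cmin unfolding desc_def by force
    have "v < x" using S(3) v assms(3) by auto
    then have "i < j" using iter_le_iff[where i=j and j=i and m=c] i j by (auto simp: not_le[symmetric])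
    then show "v \<in> (\<lambda>i. (f ^^ i) c) ` {..<j}" using i by blast
  qed
  have "Suc k \<le> j" using card_mono[OF _ sub] card_image_le[of "{..<j}" "\<lambda>i. (f ^^ i) c"] S(2) by simp
  define m where "m = (f ^^ (j - k)) c"
  have "m \<in> successful f" unfolding m_def using S(3) cS by (auto intro: succ_iter cut_succ)
  moreover have "(f ^^ k) m = (f ^^ k) 0" using iter_add[where i=k and j="j-k" and m=c] \<open>Suc k \<le> j\<close> j k
    by (simp add: m_def)
  ultimately show ?thesis unfolding cousins_def by (metis (mono_tags, lifting) mem_Collect_eq)
qed

end

lemma conj_iter: fixes f f' :: "int \<Rightarrow> int" assumes "f' = (\<lambda>n. f (n + k) - k)" shows "(f' ^^ j) n = (f ^^ j) (n + k) - k"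
  by (induction j) (auto simp: assms)

lemma conj_desc: fixes f f' :: "int \<Rightarrow> int" assumes "f' = (\<lambda>n. f (n + k) - k)"
  shows "m \<in> desc f' n \<longleftrightarrow> m + k \<in> desc f (n + k)"
  unfolding desc_def using conj_iter[OF assms] by (auto; metis add_diff_cancel_right' diff_add_cancel)

lemma conj_succ: fixes f f' :: "int \<Rightarrow> int" assumes "f' = (\<lambda>n. f (n + k) - k)"
  shows "n \<in> successful f' \<longleftrightarrow> n + k \<in> successful f"
proof -
  have "desc f' n = (\<lambda>m. m - k) ` desc f (n + k)"
    using conj_desc[OF assms] by (auto simp: image_iff) (metis add_diff_cancel_right')
  moreover have "inj (\<lambda>m::int. m - k)" by (auto simp: inj_def)
  ultimately show ?thesis unfolding successful_def
    by (simp add: finite_image_iff inj_on_subset)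
qed

lemma conj_eph: fixes f f' :: "int \<Rightarrow> int" assumes "f' = (\<lambda>n. f (n + k) - k)"
  shows "n \<in> ephemeral f' \<longleftrightarrow> n + k \<in> ephemeral f"
  using conj_succ[OF assms] by (simp add: ephemeral_def successful_def)

lemma conj_dir: fixes f f' :: "int \<Rightarrow> int" assumes "f' = (\<lambda>n. f (n + k) - k)"
  shows "m \<in> dir_eph_tilde f' n \<longleftrightarrow> m + k \<in> dir_eph_tilde f (n + k)"
proof -
  have L: "(LEAST i. 0 < i \<and> (f' ^^ i) m \<in> successful f') = (LEAST i. 0 < i \<and> (f ^^ i) (m + k) \<in> successful f)"
    using conj_iter[OF assms] conj_succ[OF assms] by simp
  show ?thesis unfolding dir_eph_tilde_def dir_eph_def
    using conj_desc[OF assms] conj_eph[OF assms] conj_iter[OF assms] L by auto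
qed

lemma conj_cous: fixes f f' :: "int \<Rightarrow> int" assumes "f' = (\<lambda>n. f (n + k) - k)"
  shows "m \<in> cousins f' n \<longleftrightarrow> m + k \<in> cousins f (n + k)"
  unfolding cousins_def using conj_iter[OF assms] by auto

lemma sum_int_meas:
  fixes H :: "'w \<Rightarrow> int \<Rightarrow> ennreal"
  assumes "\<And>m. (\<lambda>w. H w m) \<in> borel_measurable M"
  shows "(\<lambda>w. \<integral>\<^sup>+m. H w m \<partial>count_space UNIV) \<in> borel_measurable M"
proof -
  have bij: "bij_betw int_decode UNIV UNIV" by (simp add: bij_int_decode)
  have "(\<lambda>w. \<integral>\<^sup>+m. H w m \<partial>count_space UNIV) = (\<lambda>w. \<Sum>i. H w (int_decode i))"
    by (rule ext, subst nn_integral_bij_count_space[OF bij, symmetric]) (simp add: nn_integral_count_space_nat)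
  also have "\<dots> \<in> borel_measurable M" using assms by measurable
  finally show ?thesis .
qed

lemma mtp:
  fixes h :: "'w \<Rightarrow> int \<Rightarrow> int \<Rightarrow> ennreal" and \<theta> :: "int \<Rightarrow> 'w \<Rightarrow> 'w"
  assumes theta_meas: "\<And>n. \<theta> n \<in> measurable M M"
    and theta_pres: "\<And>n. distr M M (\<theta> n) = M"
    and hm: "\<And>m n. (\<lambda>w. h w m n) \<in> borel_measurable M"
    and hd: "\<And>k m n w. w \<in> space M \<Longrightarrow> h (\<theta> k w) m n = h w (m + k) (n + k)"
  shows "(\<integral>\<^sup>+w. (\<integral>\<^sup>+n. h w 0 n \<partial>count_space UNIV) \<partial>M) = (\<integral>\<^sup>+w. (\<integral>\<^sup>+m. h w m 0 \<partial>count_space UNIV) \<partial>M)"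
proof -
  have step: "(\<integral>\<^sup>+w. h w 0 n \<partial>M) = (\<integral>\<^sup>+w. h w (-n) 0 \<partial>M)" for n
  proof -
    have "(\<integral>\<^sup>+w. h w (-n) 0 \<partial>M) = (\<integral>\<^sup>+w. h w (-n) 0 \<partial>(distr M M (\<theta> n)))"
      by (simp add: theta_pres)
    also have "\<dots> = (\<integral>\<^sup>+w. h (\<theta> n w) (-n) 0 \<partial>M)"
      by (rule nn_integral_distr[OF theta_meas]) (simp add: theta_pres hm)
    also have "\<dots> = (\<integral>\<^sup>+w. h w 0 n \<partial>M)"
      by (rule nn_integral_cong) (simp add: hd)
    finally show ?thesis by simp
  qed
  have bij: "bij_betw uminus (UNIV::int set) UNIV" by (rule bij_betwI[of _ _ _ uminus]) auto
  have "(\<integral>\<^sup>+w. (\<integral>\<^sup>+n. h w 0 n \<partial>count_space UNIV) \<partial>M) = (\<integral>\<^sup>+n. (\<integral>\<^sup>+w. h w 0 n \<partial>M) \<partial>count_space UNIV)"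
    by (rule nn_integral_count_space_nn_integral) (auto simp: hm)
  also have "\<dots> = (\<integral>\<^sup>+n. (\<integral>\<^sup>+w. h w (-n) 0 \<partial>M) \<partial>count_space UNIV)"
    by (simp add: step)
  also have "\<dots> = (\<integral>\<^sup>+m. (\<integral>\<^sup>+w. h w m 0 \<partial>M) \<partial>count_space UNIV)"
    by (rule nn_integral_bij_count_space[OF bij, of "\<lambda>m. \<integral>\<^sup>+w. h w m 0 \<partial>M"])
  also have "\<dots> = (\<integral>\<^sup>+w. (\<integral>\<^sup>+m. h w m 0 \<partial>count_space UNIV) \<partial>M)"
    by (rule nn_integral_count_space_nn_integral[symmetric]) (auto simp: hm)
  finally show ?thesis .
qed

lemma cond_eq:
  assumes "finite_measure M" "S \<in> sets M"
  shows "emeasure M S * cond_nn_exp M S X = (\<integral>\<^sup>+w. X w * indicator S w \<partial>M)"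
proof (cases "emeasure M S = 0")
  case True
  have "AE w in M. w \<notin> S" using True assms(2) by (intro AE_I[where N=S]) auto
  then have "(\<integral>\<^sup>+w. X w * indicator S w \<partial>M) = 0"
    by (subst nn_integral_cong_AE[where v="\<lambda>_. 0"]) (auto elim!: eventually_mono)
  then show ?thesis using True by simp
next
  case False
  have "emeasure M S \<noteq> top" using assms by (simp add: finite_measure.emeasure_finite)
  then show ?thesis using False unfolding cond_nn_exp_def
    by (simp add: ennreal_times_divide) (metis ennreal_mult_divide_eq mult.commute)
qed

lemma prod_ge_weier:
  fixes u :: "nat \<Rightarrow> real"
  assumes "finite F" "\<forall>j\<in>F. 0 \<le> u j \<and> u j \<le> 1"
  shows "1 - (\<Sum>j\<in>F. 1 - u j) \<le> (\<Prod>j\<in>F. u j)"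
  using assms
proof (induction F rule: finite_induct)
  case empty then show ?case by simp
next
  case (insert x F)
  then have IH: "1 - (\<Sum>j\<in>F. 1 - u j) \<le> (\<Prod>j\<in>F. u j)" and ux: "0 \<le> u x" "u x \<le> 1" by auto
  have s: "0 \<le> (\<Sum>j\<in>F. 1 - u j)" using insert.prems by (intro sum_nonneg) auto
  have "u x * (1 - (\<Sum>j\<in>F. 1 - u j)) \<le> u x * (\<Prod>j\<in>F. u j)" using IH ux by (intro mult_left_mono) auto
  moreover have "1 - ((1 - u x) + (\<Sum>j\<in>F. 1 - u j)) \<le> u x * (1 - (\<Sum>j\<in>F. 1 - u j))"
  proof -
    have "u x * (\<Sum>j\<in>F. 1 - u j) \<le> (\<Sum>j\<in>F. 1 - u j)" using ux s by (simp add: mult_left_le_one_le)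
    then show ?thesis by (simp add: algebra_simps)
  qed
  ultimately show ?case by (simp only: sum.insert[OF insert.hyps] prod.insert[OF insert.hyps])
qed

locale model = prob_space M for M :: "'w measure" +
  fixes a :: "int \<Rightarrow> 'w \<Rightarrow> nat"
  assumes a_meas[measurable]: "\<And>n. a n \<in> measurable M (count_space UNIV)"
    and a_indep: "indep_vars (\<lambda>_. count_space UNIV) a UNIV"
    and a_ident: "\<And>n. distr M (count_space UNIV) (a n) = distr M (count_space UNIV) (a 0)"
    and a_int: "integrable M (\<lambda>w. real (a 0 w))"
    and p1_pos: "0 < prob {w \<in> space M. a 0 w = 1}"
begin

definition cutw :: "int \<Rightarrow> 'w \<Rightarrow> bool" where
  "cutw x w \<longleftrightarrow> (\<forall>y<x. y + int (a y w) \<le> x)"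

definition pa :: "nat \<Rightarrow> real" where "pa j = prob {w \<in> space M. a 0 w \<le> j}"
definition qq :: "nat \<Rightarrow> real" where "qq j = prob {w \<in> space M. j < a 0 w}"

lemma pa_y: "prob {w \<in> space M. a y w \<le> j} = pa j"
proof -
  have eq: "{w \<in> space M. a z w \<le> j} = a z -` {..j} \<inter> space M" for z by auto
  have "prob (a z -` {..j} \<inter> space M) = measure (distr M (count_space UNIV) (a z)) {..j}" for z
    using measure_distr[OF a_meas[of z], of "{..j}"] by simp
  then show ?thesis unfolding pa_def eq using a_ident[of y] by simp
qed

lemma pa_ge: assumes "1 \<le> j" shows "prob {w \<in> space M. a 0 w = 1} \<le> pa j"
  unfolding pa_def using assms by (intro finite_measure_mono) auto

lemma pa_qq: "pa j = 1 - qq j"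
proof -
  have "{w \<in> space M. j < a 0 w} = space M - {w \<in> space M. a 0 w \<le> j}" by auto
  then show ?thesis unfolding pa_def qq_def by (simp add: prob_compl)
qed

lemma qq_summable: "summable qq"
proof -
  have "(\<integral>\<^sup>+x. of_nat (a 0 x) \<partial>M) = (\<Sum>t. emeasure M {x\<in>space M. t < a 0 x})"
    by (rule nn_integral_nat_function) simp
  moreover have "(\<integral>\<^sup>+x. of_nat (a 0 x) \<partial>M) < \<infinity>"
    using integrableD(2)[OF a_int] by (simp add: ennreal_of_nat_eq_real_of_nat less_top)
  ultimately have "(\<Sum>t. ennreal (qq t)) \<noteq> top"
    by (simp add: qq_def emeasure_eq_measure)
  then show ?thesis by (rule summable_suminf_not_top[rotated]) (simp add: qq_def)
qed

definition CJ :: "int \<Rightarrow> nat \<Rightarrow> 'w set" where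
  "CJ x J = {w \<in> space M. \<forall>y. x - int J \<le> y \<and> y < x \<longrightarrow> a y w \<le> nat (x - y)}"

lemma CJ_prob: assumes "1 \<le> J" shows "prob (CJ x J) = (\<Prod>j\<in>{1..J}. pa j)"
proof -
  have ne: "{x - int J..<x} \<noteq> {}" using assms by auto
  have "CJ x J = (\<Inter>y\<in>{x - int J..<x}. a y -` {..nat (x - y)} \<inter> space M)"
    using ne unfolding CJ_def by auto
  then have "prob (CJ x J) = (\<Prod>y\<in>{x - int J..<x}. prob (a y -` {..nat (x - y)} \<inter> space M))"
    using indep_varsD[OF a_indep ne] by simp
  also have "\<dots> = (\<Prod>y\<in>{x - int J..<x}. pa (nat (x - y)))"
  proof (intro prod.cong refl)
    fix y
    have "a y -` {..nat (x - y)} \<inter> space M = {w \<in> space M. a y w \<le> nat (x - y)}" by auto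
    then show "prob (a y -` {..nat (x - y)} \<inter> space M) = pa (nat (x - y))" using pa_y by simp
  qed
  also have "\<dots> = (\<Prod>j\<in>{1..J}. pa j)"
    by (rule prod.reindex_bij_witness[where j="\<lambda>y. nat (x - y)" and i="\<lambda>j. x - int j"]) auto
  finally show ?thesis .
qed

lemma cut_lower: "\<exists>\<delta>>0. \<forall>x. \<delta> \<le> prob {w \<in> space M. cutw x w}"
proof -
  define p where "p = prob {w \<in> space M. a 0 w = 1}"
  have p: "0 < p" using p1_pos p_def by simp
  obtain N0 where N0: "\<forall>n\<ge>N0. norm (\<Sum>i. qq (i + n)) < 1/2"
    using suminf_exist_split[OF _ qq_summable, of "1/2"] by auto
  have qq0: "0 \<le> qq j" for j by (simp add: qq_def)
  have pa01: "0 \<le> pa j \<and> pa j \<le> 1" for j by (simp add: pa_def)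
  have tail: "(\<Sum>j\<in>{Suc N0..J}. qq j) \<le> 1/2" for J
  proof -
    have "(\<Sum>j\<in>{Suc N0..J}. qq j) \<le> (\<Sum>j\<in>{N0..<Suc J}. qq j)"
      by (intro sum_mono2) (auto simp: qq0)
    also have "\<dots> = (\<Sum>i<Suc J - N0. qq (i + N0))"
      by (rule sum.reindex_bij_witness[where j="\<lambda>j. j - N0" and i="\<lambda>i. i + N0"]) auto
    also have "\<dots> \<le> (\<Sum>i. qq (i + N0))"
      by (rule sum_le_suminf) (auto simp: qq0 summable_iff_shift qq_summable)
    also have "\<dots> \<le> 1/2" using N0 by auto
    finally show ?thesis .
  qed
  define \<delta> where "\<delta> = p ^ N0 / 2"
  have "\<delta> \<le> prob (CJ x J)" if J: "Suc N0 \<le> J" for x J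
  proof -
    have split: "{1..J} = {1..N0} \<union> {Suc N0..J}" using J by auto
    have "(\<Prod>j\<in>{1..J}. pa j) = (\<Prod>j\<in>{1..N0}. pa j) * (\<Prod>j\<in>{Suc N0..J}. pa j)"
      unfolding split by (rule prod.union_disjoint) auto
    moreover have "p ^ N0 \<le> (\<Prod>j\<in>{1..N0}. pa j)"
    proof -
      have "p ^ N0 = (\<Prod>j\<in>{1..N0}. p)" by simp
      also have "\<dots> \<le> (\<Prod>j\<in>{1..N0}. pa j)"
        using p pa_ge p_def by (intro prod_mono) auto
      finally show ?thesis .
    qed
    moreover have "1/2 \<le> (\<Prod>j\<in>{Suc N0..J}. pa j)"
    proof -
      have "1 - (\<Sum>j\<in>{Suc N0..J}. 1 - pa j) \<le> (\<Prod>j\<in>{Suc N0..J}. pa j)"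
        by (rule prod_ge_weier) (auto simp: pa01)
      moreover have "(\<Sum>j\<in>{Suc N0..J}. 1 - pa j) = (\<Sum>j\<in>{Suc N0..J}. qq j)" by (simp add: pa_qq)
      ultimately show ?thesis using tail[of J] by simp
    qed
    moreover have "0 \<le> p ^ N0" using p by simp
    ultimately have "p ^ N0 * (1/2) \<le> (\<Prod>j\<in>{1..J}. pa j)"
      using mult_mono[of "p^N0" "prod pa {1..N0}" "1/2" "prod pa {Suc N0..J}"] by simp
    then show ?thesis using CJ_prob[of J x] J by (simp add: \<delta>_def)
  qed
  moreover have "(\<lambda>J. prob (CJ x J)) \<longlonglongrightarrow> prob (\<Inter>J. CJ x J)" for x
    by (rule finite_Lim_measure_decseq) (auto simp: CJ_def decseq_def)
  moreover have "(\<Inter>J. CJ x J) = {w \<in> space M. cutw x w}" for x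
  proof (intro set_eqI iffI)
    fix w assume "w \<in> (\<Inter>J. CJ x J)"
    then have w: "w \<in> CJ x J" for J by auto
    have "y + int (a y w) \<le> x" if y: "y < x" for y
    proof -
      have "a y w \<le> nat (x - y)" using w[of "nat (x - y)"] y unfolding CJ_def by auto
      then show ?thesis using y by linarith
    qed
    then show "w \<in> {w \<in> space M. cutw x w}" using w[of 0]
      unfolding cutw_def CJ_def by auto
  next
    fix w assume "w \<in> {w \<in> space M. cutw x w}"
    then show "w \<in> (\<Inter>J. CJ x J)" unfolding cutw_def CJ_def by auto
  qed
  ultimately have "\<delta> \<le> prob {w \<in> space M. cutw x w}" for x
    by (metis (no_types, lifting) LIMSEQ_le_const)
  moreover have "0 < \<delta>" using p by (simp add: \<delta>_def)
  ultimately show ?thesis by blast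
qed

end

lemma pred_cnt: "f \<in> measurable N (count_space UNIV) \<Longrightarrow> (\<lambda>w. Q (f w)) \<in> measurable N (count_space (UNIV::bool set))"
  by (rule pred_sets1[where f=f]) auto

lemma pred_gen:
  fixes f :: "int \<Rightarrow> 'b \<Rightarrow> nat"
  assumes "\<And>y. f y \<in> measurable N (count_space UNIV)"
  shows "(\<lambda>w. \<forall>n::nat. \<exists>x::int. R n x \<and> (\<forall>y. Q x y (f y w))) \<in> measurable N (count_space (UNIV::bool set))"
proof -
  have b: "(\<lambda>w. Q x y (f y w)) \<in> measurable N (count_space (UNIV::bool set))" for x y by (rule pred_cnt[OF assms])
  show ?thesis
    apply (rule pred_intros_countable(1))
    apply (rule pred_intros_countable(2))
    apply (rule pred_intros_logic(3))
     apply (rule measurable_const)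
     apply simp
    apply (rule pred_intros_countable(1))
    apply (rule b)
    done
qed

context model begin

lemma zero_one:
  assumes X: "\<And>K::nat. X \<in> sigma_sets (space M) {a y -` B \<inter> space M | y B. int K \<le> \<bar>y\<bar>}"
  shows "prob X = 0 \<or> prob X = 1"
proof -
  define A where "A i = sigma_sets (space M) {a (int_decode i) -` B \<inter> space M | B. B \<in> sets (count_space UNIV)}" for i
  have sa: "sigma_algebra (space M) (A i)" for i unfolding A_def by (rule sigma_algebra_sigma_sets) auto
  have F: "indep_sets (\<lambda>y. sigma_sets (space M) {a y -` B \<inter> space M | B. B \<in> sets (count_space UNIV)}) UNIV"
    using a_indep unfolding indep_vars_def by blast
  have ind: "indep_sets A UNIV"
  proof (rule indep_setsI)
    fix i show "A i \<subseteq> events" using F unfolding indep_sets_def A_def by auto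
  next
    fix B J assume J: "J \<noteq> {}" "J \<subseteq> (UNIV::nat set)" "finite J" "\<forall>j\<in>J. B j \<in> A j"
    have "prob (\<Inter>y\<in>int_decode ` J. B (int_encode y)) = (\<Prod>y\<in>int_decode ` J. prob (B (int_encode y)))"
    proof (rule indep_setsD[OF F])
      show "int_decode ` J \<subseteq> UNIV" "int_decode ` J \<noteq> {}" "finite (int_decode ` J)" using J by auto
      show "\<forall>j\<in>int_decode ` J. B (int_encode j) \<in> sigma_sets (space M) {a j -` Ba \<inter> space M |Ba. Ba \<in> sets (count_space UNIV)}"
        using J(4) unfolding A_def by auto
    qed
    moreover have "(\<Inter>y\<in>int_decode ` J. B (int_encode y)) = (\<Inter>j\<in>J. B j)" by auto
    moreover have "(\<Prod>y\<in>int_decode ` J. prob (B (int_encode y))) = (\<Prod>j\<in>J. prob (B j))"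
      by (subst prod.reindex) (auto simp: inj_on_def int_decode_eq)
    ultimately show "prob (\<Inter>j\<in>J. B j) = (\<Prod>j\<in>J. prob (B j))" by simp
  qed
  have "X \<in> tail_events A"
    unfolding tail_events_def
  proof
    fix n :: nat
    define K where "K = Suc (\<Sum>i<n. nat \<bar>int_decode i\<bar>)"
    have "{a y -` B \<inter> space M | y B. int K \<le> \<bar>y\<bar>} \<subseteq> (\<Union> (A ` {n..}))"
    proof
      fix S assume "S \<in> {a y -` B \<inter> space M | y B. int K \<le> \<bar>y\<bar>}"
      then obtain y B where S: "S = a y -` B \<inter> space M" "int K \<le> \<bar>y\<bar>" by auto
      have "n \<le> int_encode y"
      proof (rule ccontr)
        assume "\<not> ?thesis" then have "int_encode y \<in> {..<n}" by auto
        then have "nat \<bar>int_decode (int_encode y)\<bar> \<le> (\<Sum>i<n. nat \<bar>int_decode i\<bar>)"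
          by (rule member_le_sum) auto
        moreover have "int (nat \<bar>y\<bar>) = \<bar>y\<bar>" by simp
        ultimately show False using S(2) unfolding K_def by simp
      qed
      moreover have "S \<in> A (int_encode y)" unfolding A_def using S by (intro sigma_sets.Basic) auto
      ultimately show "S \<in> \<Union> (A ` {n..})" by auto
    qed
    then show "X \<in> sigma_sets (space M) (\<Union> (A ` {n..}))" by (rule subsetD[OF sigma_sets_subseteq X[of K]])
  qed
  then show ?thesis by (rule kolmogorov_0_1_law[OF sa ind])
qed

lemma cutw_meas[measurable]: "cutw x \<in> measurable M (count_space (UNIV::bool set))"
proof -
  have "(\<lambda>w. \<forall>y. (\<lambda>n. y < x \<longrightarrow> y + int n \<le> x) (a y w)) \<in> measurable M (count_space (UNIV::bool set))"
    by (intro pred_intros_countable pred_cnt[OF a_meas])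
  then show ?thesis unfolding cutw_def by simp
qed

definition Gen :: "nat \<Rightarrow> 'w set set" where
  "Gen K = {a y -` B \<inter> space M | y B. int K \<le> \<bar>y\<bar>}"

lemma Gen_sub: "Gen K \<subseteq> Pow (space M)" unfolding Gen_def by auto

lemma MK_space: "space (sigma (space M) (Gen K)) = space M"
  using Gen_sub by (simp add: space_measure_of_conv)

lemma MK_sets: "sets (sigma (space M) (Gen K)) = sigma_sets (space M) (Gen K)"
  using Gen_sub by (simp add: sets_measure_of)

lemma a'_meas: "(\<lambda>w. if int K \<le> \<bar>y\<bar> then a y w else 0) \<in> measurable (sigma (space M) (Gen K)) (count_space UNIV)"
proof (cases "int K \<le> \<bar>y\<bar>")
  case True
  show ?thesis unfolding measurable_def
  proof (safe)
    fix B :: "nat set"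
    have "(\<lambda>w. if int K \<le> \<bar>y\<bar> then a y w else 0) -` B \<inter> space (sigma (space M) (Gen K)) = a y -` B \<inter> space M"
      using True by (auto simp: MK_space)
    moreover have "a y -` B \<inter> space M \<in> Gen K" using True unfolding Gen_def by auto
    ultimately show "(\<lambda>w. if int K \<le> \<bar>y\<bar> then a y w else 0) -` B \<inter> space (sigma (space M) (Gen K)) \<in> sets (sigma (space M) (Gen K))"
      by (auto simp: MK_sets intro: sigma_sets.Basic)
  qed auto
next
  case False
  then show ?thesis by simp
qed

lemma bound_fin: "\<exists>B. \<forall>y. \<bar>y\<bar> < int K \<longrightarrow> y + int (a y w) \<le> B"
proof (intro exI allI impI)
  fix y :: int assume y: "\<bar>y\<bar> < int K"
  have "\<bar>y + int (a y w)\<bar> \<le> (\<Sum>z\<in>{-int K..int K}. \<bar>z + int (a z w)\<bar>)"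
    using y by (intro member_le_sum) auto
  then show "y + int (a y w) \<le> (\<Sum>z\<in>{-int K..int K}. \<bar>z + int (a z w)\<bar>)" by linarith
qed

definition Xup where "Xup = {w \<in> space M. \<forall>N::nat. \<exists>x>int N. cutw x w}"
definition Xdown where "Xdown = {w \<in> space M. \<forall>N::nat. \<exists>x< - int N. cutw x w}"

lemma Xup_tail: "Xup \<in> sigma_sets (space M) (Gen K)"
proof -
  let ?MK = "sigma (space M) (Gen K)"
  define a' where "a' y w = (if int K \<le> \<bar>y\<bar> then a y w else 0)" for y w
  have [measurable]: "a' y \<in> measurable ?MK (count_space UNIV)" for y
    unfolding a'_def using a'_meas by simp
  have "(\<lambda>w. \<forall>N::nat. \<exists>x. x > int N \<and> (\<forall>y. (\<lambda>n. y < x \<longrightarrow> int K \<le> \<bar>y\<bar> \<longrightarrow> y + int n \<le> x) (a' y w))) \<in> measurable ?MK (count_space (UNIV::bool set))"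
    by (rule pred_gen) simp
  then have "{w \<in> space ?MK. \<forall>N::nat. \<exists>x>int N. \<forall>y<x. int K \<le> \<bar>y\<bar> \<longrightarrow> y + int (a' y w) \<le> x} \<in> sets ?MK"
    by (simp add: pred_def)
  moreover have "{w \<in> space ?MK. \<forall>N::nat. \<exists>x>int N. \<forall>y<x. int K \<le> \<bar>y\<bar> \<longrightarrow> y + int (a' y w) \<le> x} = Xup"
  proof (intro set_eqI iffI)
    fix w assume "w \<in> Xup" then show "w \<in> {w \<in> space ?MK. \<forall>N::nat. \<exists>x>int N. \<forall>y<x. int K \<le> \<bar>y\<bar> \<longrightarrow> y + int (a' y w) \<le> x}"
      by (fastforce simp: Xup_def cutw_def a'_def MK_space)
  next
    fix w assume w: "w \<in> {w \<in> space ?MK. \<forall>N::nat. \<exists>x>int N. \<forall>y<x. int K \<le> \<bar>y\<bar> \<longrightarrow> y + int (a' y w) \<le> x}"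
    obtain B where B: "\<forall>y. \<bar>y\<bar> < int K \<longrightarrow> y + int (a y w) \<le> B" using bound_fin by blast
    have "\<exists>x>int N. cutw x w" for N :: nat
    proof -
      obtain x where x: "x > int (N + nat B)" "\<forall>y<x. int K \<le> \<bar>y\<bar> \<longrightarrow> y + int (a' y w) \<le> x"
        using w by blast
      have "cutw x w" unfolding cutw_def
      proof (intro allI impI)
        fix y assume "y < x"
        show "y + int (a y w) \<le> x"
        proof (cases "int K \<le> \<bar>y\<bar>")
          case True then show ?thesis using x(2) \<open>y < x\<close> by (auto simp: a'_def)
        next
          case False
          then have "y + int (a y w) \<le> B" using B by auto
          moreover have "B \<le> int (nat B)" by simp
          moreover have "int (N + nat B) = int N + int (nat B)" by simp
          ultimately show ?thesis using x(1) by linarith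
        qed
      qed
      moreover have "int N < x" using x(1) by (simp split: if_splits)
      ultimately show ?thesis by blast
    qed
    then show "w \<in> Xup" using w by (auto simp: Xup_def MK_space)
  qed
  ultimately show ?thesis by (simp add: MK_sets)
qed

lemma Xdown_tail: "Xdown \<in> sigma_sets (space M) (Gen K)"
proof -
  let ?MK = "sigma (space M) (Gen K)"
  define a' where "a' y w = (if int K \<le> \<bar>y\<bar> then a y w else 0)" for y w
  have [measurable]: "a' y \<in> measurable ?MK (count_space UNIV)" for y
    unfolding a'_def using a'_meas by simp
  have "(\<lambda>w. \<forall>N::nat. \<exists>x. x < - int N \<and> (\<forall>y. (\<lambda>n. y < x \<longrightarrow> int K \<le> \<bar>y\<bar> \<longrightarrow> y + int n \<le> x) (a' y w))) \<in> measurable ?MK (count_space (UNIV::bool set))"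
    by (rule pred_gen) simp
  then have "{w \<in> space ?MK. \<forall>N::nat. \<exists>x< - int N. \<forall>y<x. int K \<le> \<bar>y\<bar> \<longrightarrow> y + int (a' y w) \<le> x} \<in> sets ?MK"
    by (simp add: pred_def)
  moreover have "{w \<in> space ?MK. \<forall>N::nat. \<exists>x< - int N. \<forall>y<x. int K \<le> \<bar>y\<bar> \<longrightarrow> y + int (a' y w) \<le> x} = Xdown"
  proof (intro set_eqI iffI)
    fix w assume "w \<in> Xdown" then show "w \<in> {w \<in> space ?MK. \<forall>N::nat. \<exists>x< - int N. \<forall>y<x. int K \<le> \<bar>y\<bar> \<longrightarrow> y + int (a' y w) \<le> x}"
      by (fastforce simp: Xdown_def cutw_def a'_def MK_space)
  next
    fix w assume w: "w \<in> {w \<in> space ?MK. \<forall>N::nat. \<exists>x< - int N. \<forall>y<x. int K \<le> \<bar>y\<bar> \<longrightarrow> y + int (a' y w) \<le> x}"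
    have "\<exists>x< - int N. cutw x w" for N :: nat
    proof -
      obtain x where x: "x < - int (N + K)" "\<forall>y<x. int K \<le> \<bar>y\<bar> \<longrightarrow> y + int (a' y w) \<le> x"
        using w by blast
      have "cutw x w" unfolding cutw_def
      proof (intro allI impI)
        fix y assume "y < x"
        then have "int K \<le> \<bar>y\<bar>" using x(1) by linarith
        then show "y + int (a y w) \<le> x" using x(2) \<open>y < x\<close> by (auto simp: a'_def)
      qed
      then show ?thesis using x(1) by (intro exI[of _ x]) auto
    qed
    then show "w \<in> Xdown" using w by (auto simp: Xdown_def MK_space)
  qed
  ultimately show ?thesis by (simp add: MK_sets)
qed

lemma lim_ge:
  fixes U :: "nat \<Rightarrow> 'w set"
  assumes "range U \<subseteq> events" "decseq U" "\<And>N. \<delta> \<le> prob (U N)"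
  shows "\<delta> \<le> prob (\<Inter>N. U N)"
  using finite_Lim_measure_decseq[OF assms(1,2)] assms(3) by (intro LIMSEQ_le_const) auto

lemma X_prob1: "prob Xup = 1 \<and> prob Xdown = 1"
proof -
  obtain \<delta> where d: "0 < \<delta>" "\<forall>x. \<delta> \<le> prob {w \<in> space M. cutw x w}" using cut_lower by blast
  have "\<delta> \<le> prob (\<Inter>N. {w \<in> space M. \<exists>x>int N. cutw x w})"
  proof (rule lim_ge)
    have "{w \<in> space M. \<exists>x>int N. cutw x w} \<in> events" for N by measurable
    then show "range (\<lambda>N. {w \<in> space M. \<exists>x>int N. cutw x w}) \<subseteq> events" by auto
    show "decseq (\<lambda>N. {w \<in> space M. \<exists>x>int N. cutw x w})" unfolding decseq_def by force
    fix N
    have "{w \<in> space M. cutw (int N + 1) w} \<subseteq> {w \<in> space M. \<exists>x>int N. cutw x w}"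
      by (auto intro!: exI[of _ "int N + 1"])
    moreover have "{w \<in> space M. \<exists>x>int N. cutw x w} \<in> events" by measurable
    ultimately have "prob {w \<in> space M. cutw (int N + 1) w} \<le> prob {w \<in> space M. \<exists>x>int N. cutw x w}"
      by (rule finite_measure_mono)
    then show "\<delta> \<le> prob {w \<in> space M. \<exists>x>int N. cutw x w}"
      using d(2)[rule_format, of "int N + 1"] by linarith
  qed
  moreover have "(\<Inter>N. {w \<in> space M. \<exists>x>int N. cutw x w}) = Xup" by (auto simp: Xup_def)
  ultimately have up: "\<delta> \<le> prob Xup" by simp
  have "\<delta> \<le> prob (\<Inter>N. {w \<in> space M. \<exists>x< - int N. cutw x w})"
  proof (rule lim_ge)
    have "{w \<in> space M. \<exists>x< - int N. cutw x w} \<in> events" for N by measurable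
    then show "range (\<lambda>N. {w \<in> space M. \<exists>x< - int N. cutw x w}) \<subseteq> events" by auto
    show "decseq (\<lambda>N. {w \<in> space M. \<exists>x< - int N. cutw x w})" unfolding decseq_def by force
    fix N
    have "{w \<in> space M. cutw (- int N - 1) w} \<subseteq> {w \<in> space M. \<exists>x< - int N. cutw x w}"
      by (auto intro!: exI[of _ "- int N - 1"])
    moreover have "{w \<in> space M. \<exists>x< - int N. cutw x w} \<in> events" by measurable
    ultimately have "prob {w \<in> space M. cutw (- int N - 1) w} \<le> prob {w \<in> space M. \<exists>x< - int N. cutw x w}"
      by (rule finite_measure_mono)
    then show "\<delta> \<le> prob {w \<in> space M. \<exists>x< - int N. cutw x w}"
      using d(2)[rule_format, of "- int N - 1"] by linarith
  qed
  moreover have "(\<Inter>N. {w \<in> space M. \<exists>x< - int N. cutw x w}) = Xdown" by (auto simp: Xdown_def)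
  ultimately have down: "\<delta> \<le> prob Xdown" by simp
  have "prob Xup = 0 \<or> prob Xup = 1" using Xup_tail by (intro zero_one) (simp add: Gen_def)
  moreover have "prob Xdown = 0 \<or> prob Xdown = 1" using Xdown_tail by (intro zero_one) (simp add: Gen_def)
  ultimately show ?thesis using up down d(1) by auto
qed

lemma good_AE: "AE w in M. (\<forall>N::int. \<exists>x>N. cutp (jump_map a w) x) \<and> (\<forall>N::int. \<exists>x<N. cutp (jump_map a w) x)"
proof -
  have ev: "Xup \<in> events" "Xdown \<in> events" unfolding Xup_def Xdown_def by measurable
  have "AE w in M. w \<in> Xup" "AE w in M. w \<in> Xdown" using X_prob1 ev prob_eq_1 by auto
  then show ?thesis
  proof (eventually_elim)
    case (elim w)
    have c: "cutp (jump_map a w) x \<longleftrightarrow> cutw x w" for x by (simp add: cutp_def cutw_def jump_map_def)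
    show ?case
    proof (intro conjI allI)
      fix N :: int
      have "\<forall>K::nat. \<exists>x>int K. cutw x w" using elim(1) by (simp add: Xup_def)
      then obtain x where "x > int (nat N)" "cutw x w" by blast
      then show "\<exists>x>N. cutp (jump_map a w) x" using c by (intro exI[of _ x]) (auto split: if_splits)
    next
      fix N :: int
      have "\<forall>K::nat. \<exists>x< - int K. cutw x w" using elim(2) by (simp add: Xdown_def)
      then obtain x where "x < - int (nat (- N))" "cutw x w" by blast
      then show "\<exists>x<N. cutp (jump_map a w) x" using c by (intro exI[of _ x]) (auto split: if_splits)
    qed
  qed
qed

end

lemma sum_single:
  fixes G :: "int \<Rightarrow> ennreal"
  assumes "\<And>m. P m \<longleftrightarrow> m = c"
  shows "(\<integral>\<^sup>+m. (if P m then G m else 0) \<partial>count_space UNIV) = G c"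
proof -
  have "(\<integral>\<^sup>+m. (if P m then G m else 0) \<partial>count_space UNIV) = (\<integral>\<^sup>+m. G c * indicator {c} m \<partial>count_space UNIV)"
    using assms by (intro nn_integral_cong) (auto simp: indicator_def)
  also have "\<dots> = G c" by (subst nn_integral_cmult_indicator) auto
  finally show ?thesis .
qed

lemma eq_meas:
  fixes f g :: "'w \<Rightarrow> int"
  assumes "f \<in> measurable M (count_space UNIV)" "g \<in> measurable M (count_space UNIV)"
  shows "(\<lambda>w. f w = g w) \<in> measurable M (count_space (UNIV::bool set))"
proof -
  have "(\<lambda>w. (\<lambda>i w. g w = i) (f w) w) \<in> measurable M (count_space (UNIV::bool set))"
  proof (rule measurable_compose_countable'[OF _ assms(1)])
    fix i show "(\<lambda>w. g w = i) \<in> measurable M (count_space (UNIV::bool set))"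
      by (rule pred_cnt[OF assms(2)])
  qed auto
  then show ?thesis by (simp add: eq_commute)
qed

locale full = model M a for M :: "'w measure" and a +
  fixes \<theta> :: "int \<Rightarrow> 'w \<Rightarrow> 'w" and g :: "'w \<Rightarrow> int \<Rightarrow> int \<Rightarrow> real"
  assumes theta_meas: "\<And>n. \<theta> n \<in> measurable M M"
    and theta_pres: "\<And>n. distr M M (\<theta> n) = M"
    and a_pos: "\<And>n w. w \<in> space M \<Longrightarrow> 1 \<le> a n w"
    and a_flow: "\<And>n k w. w \<in> space M \<Longrightarrow> a n (\<theta> k w) = a (n + k) w"
    and g_meas[measurable]: "\<And>m n. (\<lambda>w. g w m n) \<in> borel_measurable M"
    and g_diag: "\<And>k m n w. w \<in> space M \<Longrightarrow> g (\<theta> k w) m n = g w (m + k) (n + k)"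
begin

abbreviation F where "F w \<equiv> jump_map a w"

lemma inc: assumes w: "w \<in> space M" shows "incf (F w)"
proof
  fix n
  have "1 \<le> a n w" using a_pos w by blast
  then show "n < F w n" by (simp add: jump_map_def)
qed

lemma iter_meas[measurable]: "(\<lambda>w. (F w ^^ j) m) \<in> measurable M (count_space UNIV)"
proof (induction j)
  case 0 then show ?case by simp
next
  case (Suc j)
  have "(\<lambda>w. (\<lambda>i w. i + int (a i w)) ((F w ^^ j) m) w) \<in> measurable M (count_space UNIV)"
  proof (rule measurable_compose_countable'[OF _ Suc])
    fix i show "(\<lambda>w. i + int (a i w)) \<in> measurable M (count_space UNIV)"
      by (rule measurable_compose[OF a_meas measurable_count_space])
  qed auto
  then show ?case by (simp add: jump_map_def)
qed

lemma iter_eq_meas[measurable]: "(\<lambda>w. (F w ^^ j) m = (F w ^^ i) n) \<in> measurable M (count_space (UNIV::bool set))"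
  by (rule eq_meas) measurable

lemma iter_eqc_meas[measurable]: "(\<lambda>w. (F w ^^ j) y = m) \<in> measurable M (count_space (UNIV::bool set))"
  using iter_eq_meas[of j y 0 m] by simp

lemma succ_meas[measurable]: "(\<lambda>w. m \<in> successful (F w)) \<in> measurable M (count_space (UNIV::bool set))"
proof -
  define P where "P = (\<lambda>w. \<forall>N::int. \<exists>y. y < N \<and> (\<exists>j. (F w ^^ j) y = m))"
  have meas: "P \<in> measurable M (count_space (UNIV::bool set))"
    unfolding P_def
    apply (rule pred_intros_countable(1))
    apply (rule pred_intros_countable(2))
    apply (rule pred_intros_logic(3))
     apply (rule measurable_const)
     apply simp
    apply (rule pred_intros_countable(2))
    apply (rule iter_eqc_meas)
    done
  have eq: "(m \<in> successful (F w)) = P w" if w: "w \<in> space M" for w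
  proof -
    have "(m \<in> successful (F w)) = (\<forall>N::int. \<exists>y\<in>desc (F w) m. y < N)" by (rule incf.succ_iff[OF inc[OF w]])
    also have "\<dots> = P w"
      unfolding desc_def Bex_def mem_Collect_eq P_def by (simp add: conj_commute)
    finally show ?thesis .
  qed
  show ?thesis using measurable_cong[where f="\<lambda>w. m \<in> successful (F w)" and g=P and M=M and M'="count_space (UNIV::bool set)", OF eq] meas
    by blast
qed

lemma succ_iter_meas[measurable]: "(\<lambda>w. (F w ^^ k) n \<in> successful (F w)) \<in> measurable M (count_space (UNIV::bool set))"
  by (rule measurable_compose_countable'[where f="\<lambda>i w. i \<in> successful (F w)" and g="\<lambda>w. (F w ^^ k) n" and I=UNIV]) auto

lemma det_meas[measurable]: "(\<lambda>w. n \<in> dir_eph_tilde (F w) m) \<in> measurable M (count_space (UNIV::bool set))"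
proof -
  define L where "L w = (LEAST k. 0 < k \<and> (F w ^^ k) n \<in> successful (F w))" for w
  have Lm: "L \<in> measurable M (count_space UNIV)" unfolding L_def
    apply (rule measurable_Least)
    apply (rule pred_intros_logic(3))
     apply (rule measurable_const)
     apply simp
    apply (rule succ_iter_meas)
    done
  have LL: "(\<lambda>w. (F w ^^ L w) n = m) \<in> measurable M (count_space (UNIV::bool set))"
    by (rule measurable_compose_countable'[where f="\<lambda>i w. (F w ^^ i) n = m" and g=L and I=UNIV]) (auto intro: Lm)
  have "(\<lambda>w. n = m \<or> ((\<exists>j. (F w ^^ j) n = m) \<and> \<not> n \<in> successful (F w) \<and> (F w ^^ L w) n = m))
     \<in> measurable M (count_space (UNIV::bool set))"
    apply (rule pred_intros_logic(5))
     apply (rule measurable_const)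
     apply simp
    apply (rule pred_intros_logic(3))
     apply (rule pred_intros_countable(2))
     apply (rule iter_eqc_meas)
    apply (rule pred_intros_logic(3))
     apply (rule pred_intros_logic(2))
     apply (rule succ_meas)
    apply (rule LL)
    done
  moreover have "(n \<in> dir_eph_tilde (F w) m) = (n = m \<or> ((\<exists>j. (F w ^^ j) n = m) \<and> \<not> n \<in> successful (F w) \<and> (F w ^^ L w) n = m))" for w
    by (auto simp: dir_eph_tilde_def dir_eph_def desc_def ephemeral_def successful_def L_def)
  ultimately show ?thesis by simp
qed

lemma cous_meas[measurable]: "(\<lambda>w. n \<in> cousins (F w) m) \<in> measurable M (count_space (UNIV::bool set))"
  unfolding cousins_def mem_Collect_eq
  apply (rule pred_intros_countable(2))
  apply (rule iter_eq_meas)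
  done

lemma F_shift: "w \<in> space M \<Longrightarrow> F (\<theta> k w) = (\<lambda>n. F w (n + k) - k)"
  by (auto simp: jump_map_def a_flow)

definition Sset where "Sset = {w \<in> space M. 0 \<in> successful (F w)}"
definition Eset where "Eset = {w \<in> space M. 0 \<in> ephemeral (F w)}"

lemma eph_iff: "n \<in> ephemeral f \<longleftrightarrow> n \<notin> successful f"
  by (simp add: ephemeral_def successful_def)

lemma Sset_sets[measurable]: "Sset \<in> sets M"
  unfolding Sset_def using succ_meas[of 0] by (simp add: pred_def)

lemma Eset_sets[measurable]: "Eset \<in> sets M"
proof -
  have "Eset = space M - Sset" by (auto simp: Eset_def Sset_def eph_iff)
  then show ?thesis by auto
qed

definition h1 where "h1 w m n = (if m \<in> successful (F w) \<and> n \<in> dir_eph_tilde (F w) m then ennreal (g w m n) else 0)"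
definition h2 where "h2 w m n = (if m \<in> successful (F w) \<and> n \<in> cousins (F w) m then ennreal (g w m n) else 0)"

lemma h1_meas: "(\<lambda>w. h1 w m n) \<in> borel_measurable M"
  unfolding h1_def
proof (rule measurable_If)
  have "(\<lambda>w. m \<in> successful (F w) \<and> n \<in> dir_eph_tilde (F w) m) \<in> measurable M (count_space (UNIV::bool set))"
    by (rule pred_intros_logic(3)[OF succ_meas det_meas])
  then show "{w \<in> space M. m \<in> successful (F w) \<and> n \<in> dir_eph_tilde (F w) m} \<in> sets M" by (simp add: pred_def)
qed auto

lemma h2_meas: "(\<lambda>w. h2 w m n) \<in> borel_measurable M"
  unfolding h2_def
proof (rule measurable_If)
  have "(\<lambda>w. m \<in> successful (F w) \<and> n \<in> cousins (F w) m) \<in> measurable M (count_space (UNIV::bool set))"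
    by (rule pred_intros_logic(3)[OF succ_meas cous_meas])
  then show "{w \<in> space M. m \<in> successful (F w) \<and> n \<in> cousins (F w) m} \<in> sets M" by (simp add: pred_def)
qed auto

lemma h1_diag: assumes w: "w \<in> space M" shows "h1 (\<theta> k w) m n = h1 w (m + k) (n + k)"
proof -
  have s: "m \<in> successful (F (\<theta> k w)) \<longleftrightarrow> m + k \<in> successful (F w)" by (rule conj_succ[OF F_shift[OF w]])
  have d: "n \<in> dir_eph_tilde (F (\<theta> k w)) m \<longleftrightarrow> n + k \<in> dir_eph_tilde (F w) (m + k)" by (rule conj_dir[OF F_shift[OF w]])
  show ?thesis unfolding h1_def s d g_diag[OF w] ..
qed

lemma h2_diag: assumes w: "w \<in> space M" shows "h2 (\<theta> k w) m n = h2 w (m + k) (n + k)"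
proof -
  have s: "m \<in> successful (F (\<theta> k w)) \<longleftrightarrow> m + k \<in> successful (F w)" by (rule conj_succ[OF F_shift[OF w]])
  have d: "n \<in> cousins (F (\<theta> k w)) m \<longleftrightarrow> n + k \<in> cousins (F w) (m + k)" by (rule conj_cous[OF F_shift[OF w]])
  show ?thesis unfolding h2_def s d g_diag[OF w] ..
qed

lemma lhs1: "(\<integral>\<^sup>+w. (\<integral>\<^sup>+n. ennreal (g w 0 n) \<partial>count_space (dir_eph_tilde (F w) 0)) * indicator Sset w \<partial>M)
  = (\<integral>\<^sup>+w. (\<integral>\<^sup>+n. h1 w 0 n \<partial>count_space UNIV) \<partial>M)"
proof (rule nn_integral_cong)
  fix w assume w: "w \<in> space M"
  show "(\<integral>\<^sup>+n. ennreal (g w 0 n) \<partial>count_space (dir_eph_tilde (F w) 0)) * indicator Sset w = (\<integral>\<^sup>+n. h1 w 0 n \<partial>count_space UNIV)"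
  proof (cases "0 \<in> successful (F w)")
    case True
    have "(\<integral>\<^sup>+n. h1 w 0 n \<partial>count_space UNIV) = (\<integral>\<^sup>+n. ennreal (g w 0 n) * indicator (dir_eph_tilde (F w) 0) n \<partial>count_space UNIV)"
      using True by (intro nn_integral_cong) (simp add: h1_def indicator_def)
    then show ?thesis using True w by (simp add: Sset_def nn_integral_count_space_indicator)
  next
    case False
    then show ?thesis using w by (simp add: Sset_def h1_def)
  qed
qed

lemma lhs2: "(\<integral>\<^sup>+w. (\<integral>\<^sup>+n. ennreal (g w 0 n) \<partial>count_space (cousins (F w) 0)) * indicator Sset w \<partial>M)
  = (\<integral>\<^sup>+w. (\<integral>\<^sup>+n. h2 w 0 n \<partial>count_space UNIV) \<partial>M)"
proof (rule nn_integral_cong)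
  fix w assume w: "w \<in> space M"
  show "(\<integral>\<^sup>+n. ennreal (g w 0 n) \<partial>count_space (cousins (F w) 0)) * indicator Sset w = (\<integral>\<^sup>+n. h2 w 0 n \<partial>count_space UNIV)"
  proof (cases "0 \<in> successful (F w)")
    case True
    have "(\<integral>\<^sup>+n. h2 w 0 n \<partial>count_space UNIV) = (\<integral>\<^sup>+n. ennreal (g w 0 n) * indicator (cousins (F w) 0) n \<partial>count_space UNIV)"
      using True by (intro nn_integral_cong) (simp add: h2_def indicator_def)
    then show ?thesis using True w by (simp add: Sset_def nn_integral_count_space_indicator)
  next
    case False
    then show ?thesis using w by (simp add: Sset_def h2_def)
  qed
qed

lemma split_int:
  fixes H :: "'w \<Rightarrow> int \<Rightarrow> ennreal" and G1 G2 :: "'w \<Rightarrow> ennreal"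
  assumes Hm: "\<And>m. (\<lambda>w. H w m) \<in> borel_measurable M"
    and G1m: "G1 \<in> borel_measurable M"
    and AE1: "AE w in M. w \<in> Sset \<longrightarrow> (\<integral>\<^sup>+m. H w m \<partial>count_space UNIV) = G1 w"
    and AE2: "AE w in M. w \<in> Eset \<longrightarrow> (\<integral>\<^sup>+m. H w m \<partial>count_space UNIV) = G2 w"
  shows "(\<integral>\<^sup>+w. (\<integral>\<^sup>+m. H w m \<partial>count_space UNIV) \<partial>M)
    = (\<integral>\<^sup>+w. G1 w * indicator Sset w \<partial>M) + (\<integral>\<^sup>+w. G2 w * indicator Eset w \<partial>M)"
proof -
  have sm[measurable]: "(\<lambda>w. \<integral>\<^sup>+m. H w m \<partial>count_space UNIV) \<in> borel_measurable M"
    by (rule sum_int_meas[OF Hm])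
  have part: "w \<in> Sset \<or> w \<in> Eset" "\<not> (w \<in> Sset \<and> w \<in> Eset)" if "w \<in> space M" for w
    using that by (auto simp: Sset_def Eset_def eph_iff)
  have "(\<integral>\<^sup>+w. (\<integral>\<^sup>+m. H w m \<partial>count_space UNIV) \<partial>M)
     = (\<integral>\<^sup>+w. G1 w * indicator Sset w + (\<integral>\<^sup>+m. H w m \<partial>count_space UNIV) * indicator Eset w \<partial>M)"
  proof (rule nn_integral_cong_AE)
    show "AE w in M. (\<integral>\<^sup>+m. H w m \<partial>count_space UNIV) = G1 w * indicator Sset w + (\<integral>\<^sup>+m. H w m \<partial>count_space UNIV) * indicator Eset w"
      using AE1 AE_space
    proof eventually_elim
      case (elim w)
      then show ?case using part[of w] by (cases "w \<in> Sset") (auto simp: indicator_def)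
    qed
  qed
  also have "\<dots> = (\<integral>\<^sup>+w. G1 w * indicator Sset w \<partial>M) + (\<integral>\<^sup>+w. (\<integral>\<^sup>+m. H w m \<partial>count_space UNIV) * indicator Eset w \<partial>M)"
    by (rule nn_integral_add) (measurable, rule G1m, measurable)
  also have "(\<integral>\<^sup>+w. (\<integral>\<^sup>+m. H w m \<partial>count_space UNIV) * indicator Eset w \<partial>M) = (\<integral>\<^sup>+w. G2 w * indicator Eset w \<partial>M)"
  proof (rule nn_integral_cong_AE)
    show "AE w in M. (\<integral>\<^sup>+m. H w m \<partial>count_space UNIV) * indicator Eset w = G2 w * indicator Eset w"
      using AE2 by eventually_elim (auto simp: indicator_def)
  qed
  finally show ?thesis .
qed

abbreviation Gd where "Gd w \<equiv> (\<forall>N::int. \<exists>x>N. cutp (F w) x) \<and> (\<forall>N::int. \<exists>x<N. cutp (F w) x)"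

lemma rhs1: "(\<integral>\<^sup>+w. (\<integral>\<^sup>+m. h1 w m 0 \<partial>count_space UNIV) \<partial>M)
  = (\<integral>\<^sup>+w. ennreal (g w 0 0) * indicator Sset w \<partial>M) + (\<integral>\<^sup>+w. ennreal (g w (n_d (F w)) 0) * indicator Eset w \<partial>M)"
proof (rule split_int)
  show "(\<lambda>w. h1 w m 0) \<in> borel_measurable M" for m by (rule h1_meas)
  show "(\<lambda>w. ennreal (g w 0 0)) \<in> borel_measurable M" by measurable
  show "AE w in M. w \<in> Sset \<longrightarrow> (\<integral>\<^sup>+m. h1 w m 0 \<partial>count_space UNIV) = ennreal (g w 0 0)"
  proof (rule AE_I2, rule impI)
    fix w assume w: "w \<in> space M" and S: "w \<in> Sset"
    then have s0: "0 \<in> successful (F w)" by (simp add: Sset_def)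
    show "(\<integral>\<^sup>+m. h1 w m 0 \<partial>count_space UNIV) = ennreal (g w 0 0)"
      unfolding h1_def
      using sum_single[where P="\<lambda>m. m \<in> successful (F w) \<and> 0 \<in> dir_eph_tilde (F w) m" and G="\<lambda>m. ennreal (g w m 0)" and c=0,
          OF incf.nd_succ[OF inc[OF w] s0]] by simp
  qed
  show "AE w in M. w \<in> Eset \<longrightarrow> (\<integral>\<^sup>+m. h1 w m 0 \<partial>count_space UNIV) = ennreal (g w (n_d (F w)) 0)"
    using good_AE AE_space
  proof eventually_elim
    case (elim w)
    show ?case
    proof
      assume E: "w \<in> Eset"
      then have e0: "0 \<in> ephemeral (F w)" by (simp add: Eset_def)
      obtain x where x: "x > 0" "cutp (F w) x" using elim(1) by blast
      obtain m0 where H: "\<And>m. (m \<in> successful (F w) \<and> 0 \<in> dir_eph_tilde (F w) m) \<longleftrightarrow> m = m0"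
        using incf.nd_unique[OF inc[OF elim(2)] e0 x(2) x(1)] by blast
      have nd: "n_d (F w) = m0" unfolding n_d_def using H by (intro the_equality) auto
      show "(\<integral>\<^sup>+m. h1 w m 0 \<partial>count_space UNIV) = ennreal (g w (n_d (F w)) 0)"
        unfolding h1_def nd
        using sum_single[where P="\<lambda>m. m \<in> successful (F w) \<and> 0 \<in> dir_eph_tilde (F w) m" and G="\<lambda>m. ennreal (g w m 0)" and c=m0,
          OF H] by simp
    qed
  qed
qed

lemma rhs2: "(\<integral>\<^sup>+w. (\<integral>\<^sup>+m. h2 w m 0 \<partial>count_space UNIV) \<partial>M)
  = (\<integral>\<^sup>+w. ennreal (g w 0 0) * indicator Sset w \<partial>M) + (\<integral>\<^sup>+w. ennreal (g w (n_l (F w)) 0) * indicator Eset w \<partial>M)"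
proof (rule split_int)
  show "(\<lambda>w. h2 w m 0) \<in> borel_measurable M" for m by (rule h2_meas)
  show "(\<lambda>w. ennreal (g w 0 0)) \<in> borel_measurable M" by measurable
  show "AE w in M. w \<in> Sset \<longrightarrow> (\<integral>\<^sup>+m. h2 w m 0 \<partial>count_space UNIV) = ennreal (g w 0 0)"
    using good_AE AE_space
  proof eventually_elim
    case (elim w)
    show ?case
    proof
      assume "w \<in> Sset"
      then have s0: "0 \<in> successful (F w)" by (simp add: Sset_def)
      have c00: "0 \<in> cousins (F w) 0" unfolding cousins_def by auto
      have H: "(m \<in> successful (F w) \<and> 0 \<in> cousins (F w) m) \<longleftrightarrow> m = 0" for m
        using incf.cous_uniq[OF inc[OF elim(2)], of m 0] elim(1) s0 c00 by auto
      show "(\<integral>\<^sup>+m. h2 w m 0 \<partial>count_space UNIV) = ennreal (g w 0 0)"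
        unfolding h2_def
        using sum_single[where P="\<lambda>m. m \<in> successful (F w) \<and> 0 \<in> cousins (F w) m" and G="\<lambda>m. ennreal (g w m 0)" and c=0,
          OF H] by simp
    qed
  qed
  show "AE w in M. w \<in> Eset \<longrightarrow> (\<integral>\<^sup>+m. h2 w m 0 \<partial>count_space UNIV) = ennreal (g w (n_l (F w)) 0)"
    using good_AE AE_space
  proof eventually_elim
    case (elim w)
    show ?case
    proof
      assume E: "w \<in> Eset"
      obtain x where x: "x > 0" "cutp (F w) x" using elim(1) by blast
      obtain m0 where m0: "m0 \<in> successful (F w)" "0 \<in> cousins (F w) m0"
        using incf.cous_exists[OF inc[OF elim(2)] _ x(2) x(1)] elim(1) by blast
      have H: "(m \<in> successful (F w) \<and> 0 \<in> cousins (F w) m) \<longleftrightarrow> m = m0" for m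
        using incf.cous_uniq[OF inc[OF elim(2)], of m m0] elim(1) m0 by auto
      have nl: "n_l (F w) = m0" unfolding n_l_def using H by (intro the_equality) auto
      show "(\<integral>\<^sup>+m. h2 w m 0 \<partial>count_space UNIV) = ennreal (g w (n_l (F w)) 0)"
        unfolding h2_def nl
        using sum_single[where P="\<lambda>m. m \<in> successful (F w) \<and> 0 \<in> cousins (F w) m" and G="\<lambda>m. ennreal (g w m 0)" and c=m0,
          OF H] by simp
    qed
  qed
qed

lemma final1: "(\<integral>\<^sup>+w. (\<integral>\<^sup>+n. ennreal (g w 0 n) \<partial>count_space (dir_eph_tilde (F w) 0)) * indicator Sset w \<partial>M)
  = (\<integral>\<^sup>+w. ennreal (g w 0 0) * indicator Sset w \<partial>M) + (\<integral>\<^sup>+w. ennreal (g w (n_d (F w)) 0) * indicator Eset w \<partial>M)"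
  using lhs1 mtp[where h=h1, OF theta_meas theta_pres h1_meas h1_diag] rhs1 by simp

lemma final2: "(\<integral>\<^sup>+w. (\<integral>\<^sup>+n. ennreal (g w 0 n) \<partial>count_space (cousins (F w) 0)) * indicator Sset w \<partial>M)
  = (\<integral>\<^sup>+w. ennreal (g w 0 0) * indicator Sset w \<partial>M) + (\<integral>\<^sup>+w. ennreal (g w (n_l (F w)) 0) * indicator Eset w \<partial>M)"
  using lhs2 mtp[where h=h2, OF theta_meas theta_pres h2_meas h2_diag] rhs2 by simp

end

theorem mainTheorem10:
  fixes M :: "'w measure" and \<theta> :: "int \<Rightarrow> 'w \<Rightarrow> 'w"
    and a :: "int \<Rightarrow> 'w \<Rightarrow> nat" and g :: "'w \<Rightarrow> int \<Rightarrow> int \<Rightarrow> real"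
  assumes prob: "prob_space M"
    and theta_meas: "\<And>n. \<theta> n \<in> measurable M M"
    and theta_bij: "\<And>n. bij_betw (\<theta> n) (space M) (space M)"
    and theta_zero: "\<And>w. w \<in> space M \<Longrightarrow> \<theta> 0 w = w"
    and theta_add: "\<And>m n w. w \<in> space M \<Longrightarrow> \<theta> (m + n) w = \<theta> m (\<theta> n w)"
    and theta_pres: "\<And>n. distr M M (\<theta> n) = M"
    and a_meas: "\<And>n. a n \<in> measurable M (count_space UNIV)"
    and a_pos: "\<And>n w. w \<in> space M \<Longrightarrow> 1 \<le> a n w"
    and a_flow: "\<And>n k w. w \<in> space M \<Longrightarrow> a n (\<theta> k w) = a (n + k) w"
    and a_indep: "prob_space.indep_vars M (\<lambda>_. count_space UNIV) a UNIV"
    and a_ident: "\<And>n. distr M (count_space UNIV) (a n) = distr M (count_space UNIV) (a 0)"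
    and a_int: "integrable M (\<lambda>w. real (a 0 w))"
    and p1_pos: "0 < measure M {w \<in> space M. a 0 w = 1}"
    and p1_lt1: "measure M {w \<in> space M. a 0 w = 1} < 1"
    and g_meas: "\<And>m n. (\<lambda>w. g w m n) \<in> borel_measurable M"
    and g_nonneg: "\<And>w m n. w \<in> space M \<Longrightarrow> 0 \<le> g w m n"
    and g_diag: "\<And>k m n w. w \<in> space M \<Longrightarrow> g (\<theta> k w) m n = g w (m + k) (n + k)"
  defines "S \<equiv> {w \<in> space M. 0 \<in> successful (jump_map a w)}"
    and "E \<equiv> {w \<in> space M. 0 \<in> ephemeral (jump_map a w)}"
  shows "(emeasure M S * cond_nn_exp M S
           (\<lambda>w. \<integral>\<^sup>+ n. ennreal (g w 0 n) \<partial>count_space (dir_eph_tilde (jump_map a w) 0))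
         = emeasure M S * cond_nn_exp M S (\<lambda>w. ennreal (g w 0 0))
           + emeasure M E * cond_nn_exp M E (\<lambda>w. ennreal (g w (n_d (jump_map a w)) 0)))
     \<and> (emeasure M S * cond_nn_exp M S
           (\<lambda>w. \<integral>\<^sup>+ n. ennreal (g w 0 n) \<partial>count_space (cousins (jump_map a w) 0))
         = emeasure M S * cond_nn_exp M S (\<lambda>w. ennreal (g w 0 0))
           + emeasure M E * cond_nn_exp M E (\<lambda>w. ennreal (g w (n_l (jump_map a w)) 0)))"
proof -
  interpret P: prob_space M by (rule prob)
  interpret full M a \<theta> g
  proof (unfold_locales)
    show "\<And>n. a n \<in> measurable M (count_space UNIV)" by (rule a_meas)
    show "P.indep_vars (\<lambda>_. count_space UNIV) a UNIV" by (rule a_indep)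
    show "\<And>n. distr M (count_space UNIV) (a n) = distr M (count_space UNIV) (a 0)" by (rule a_ident)
    show "integrable M (\<lambda>w. real (a 0 w))" by (rule a_int)
    show "0 < P.prob {w \<in> space M. a 0 w = 1}" by (rule p1_pos)
    show "\<And>n. \<theta> n \<in> measurable M M" by (rule theta_meas)
    show "\<And>n. distr M M (\<theta> n) = M" by (rule theta_pres)
    show "\<And>n w. w \<in> space M \<Longrightarrow> 1 \<le> a n w" by (rule a_pos)
    show "\<And>n k w. w \<in> space M \<Longrightarrow> a n (\<theta> k w) = a (n + k) w" by (rule a_flow)
    show "\<And>m n. (\<lambda>w. g w m n) \<in> borel_measurable M" by (rule g_meas)
    show "\<And>k m n w. w \<in> space M \<Longrightarrow> g (\<theta> k w) m n = g w (m + k) (n + k)" by (rule g_diag)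
  qed
  have SS: "S = Sset" by (simp add: S_def Sset_def)
  have EE: "E = Eset" by (simp add: E_def Eset_def)
  have fm: "finite_measure M" by (rule P.finite_measure_axioms)
  show ?thesis unfolding SS EE cond_eq[OF fm Sset_sets] cond_eq[OF fm Eset_sets]
    using final1 final2 by simp
qed

end
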